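(* For every integer $m\ge3$, $\{1,m\}\notin\mathcal{I}_1$; that is, there is no interval-filling summable sequence of positive reals whose cardinal function has range exactly $\{1,m\}$.
   Context: For a summable sequence $\mathbf{x}=(x_n)$ of positive reals, $\mathcal{A}(\mathbf{x})=\{\sum_{n\in A}x_n: A\subseteq\mathbb{N}\}$ is its achievement set and its cardinal function $f$ assigns to $x\in\mathcal{A}(\mathbf{x})$ the cardinality (a positive integer, $\omega$, or $\mathfrak{c}$) of $\{(\varepsilon_n)\in\{0,1\}^{\mathbb{N}}:\sum\varepsilon_nx_n=x\}$. A sequence is interval-filling if its achievement set is an interval. $\mathcal{I}_1$ is the family of ranges of cardinal functions of interval-filling sequences. *)

theory Defs
  imports "HOL-Analysis.Analysis"
begin

datatype cardval = FinCard nat | Omega | Continuum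

definition cardval_of :: "'a set \<Rightarrow> cardval" where
  "cardval_of S = (if finite S then FinCard (card S)
                   else if countable S then Omega else Continuum)"

text \<open>Subseries sum selected by A (A corresponds to a 0-1 sequence).\<close>
definition subsum :: "(nat \<Rightarrow> real) \<Rightarrow> nat set \<Rightarrow> real" where
  "subsum x A = (\<Sum>n. if n \<in> A then x n else 0)"

definition achievement_set :: "(nat \<Rightarrow> real) \<Rightarrow> real set" where
  "achievement_set x = {subsum x A | A. True}"

definition cardinal_function :: "(nat \<Rightarrow> real) \<Rightarrow> real \<Rightarrow> cardval" where
  "cardinal_function x t = cardval_of {A :: nat set. subsum x A = t}"

definition interval_filling :: "(nat \<Rightarrow> real) \<Rightarrow> bool" where
  "interval_filling x \<longleftrightarrow> is_interval (achievement_set x)"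

end

theory Submission
  imports Defs
begin

lemma closed_avoid:
  fixes x :: "nat \<Rightarrow> real"
  assumes pos: "\<And>n. x n > 0" and sx: "summable x"
  shows "closed {subsum x A | A. k \<notin> A}"
proof -
  define S where "S = (\<lambda>n::nat. if n = k then {0} else {0,1::real})"
  define K where "K = PiE UNIV S"
  define h where "h = (\<lambda>e::nat\<Rightarrow>real. (\<Sum>n. e n * x n))"
  have "compactin (product_topology (\<lambda>_. euclidean) UNIV) K"
    unfolding K_def by (subst compactin_PiE) (auto simp: S_def)
  hence cK: "compact K" by (simp add: euclidean_product_topology)
  have bnd: "norm (e n * x n) \<le> x n" if "e \<in> K" for e n
  proof -
    have "e n \<in> S n" using that unfolding K_def by auto
    hence "e n = 0 \<or> e n = 1" by (auto simp: S_def split: if_splits)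
    thus ?thesis using pos[of n] by auto
  qed
  have ul: "uniform_limit K (\<lambda>N e. \<Sum>i<N. e i * x i) h sequentially"
    unfolding h_def by (rule Weierstrass_m_test[OF bnd sx])
  have "continuous_on K h"
  proof (rule uniform_limit_theorem[OF _ ul])
    have c1: "continuous_on K (\<lambda>e::nat\<Rightarrow>real. e i * x i)" for i
      by (rule continuous_on_mult_right, rule continuous_on_subset[OF continuous_on_product_coordinates]) simp
    show "\<forall>\<^sub>F N in sequentially. continuous_on K (\<lambda>e. \<Sum>i<N. e i * x i)"
      by (rule always_eventually, rule allI, rule continuous_on_sum, rule c1)
  qed simp
  hence "compact (h ` K)" using cK by (rule compact_continuous_image)
  moreover have "h ` K = {subsum x A | A. k \<notin> A}"
  proof
    show "h ` K \<subseteq> {subsum x A | A. k \<notin> A}"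
    proof
      fix t assume "t \<in> h ` K"
      then obtain e where e: "e \<in> K" "t = h e" by auto
      have ev: "e n = 0 \<or> e n = 1" for n
        using e(1) unfolding K_def S_def by (auto split: if_splits)
      have "e k \<in> S k" using e(1) unfolding K_def by blast
      hence "e k = 0" unfolding S_def by simp
      hence "k \<notin> {n. e n = 1}" by auto
      moreover have "t = subsum x {n. e n = 1}"
        unfolding e(2) h_def subsum_def
        by (rule arg_cong[where f=suminf]) (use ev in fastforce)
      ultimately show "t \<in> {subsum x A | A. k \<notin> A}" by blast
    qed
  next
    show "{subsum x A | A. k \<notin> A} \<subseteq> h ` K"
    proof
      fix t assume "t \<in> {subsum x A | A. k \<notin> A}"
      then obtain A where A: "k \<notin> A" "t = subsum x A" by auto
      define e where "e = (\<lambda>n. if n \<in> A then 1 else (0::real))"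
      have "e \<in> K" unfolding K_def S_def e_def using A(1) by auto
      moreover have "t = h e" unfolding A(2) h_def subsum_def e_def
        by (rule arg_cong[where f=suminf]) auto
      ultimately show "t \<in> h ` K" by blast
    qed
  qed
  ultimately show ?thesis using compact_imp_closed by metis
qed

lemma sub_summable:
  fixes x :: "nat \<Rightarrow> real"
  assumes pos: "\<And>n. x n > 0" and sx: "summable x"
  shows "summable (\<lambda>n. if n \<in> A then x n else 0)"
  by (rule summable_comparison_test'[OF sx, of 0]) (use pos in \<open>auto simp: less_imp_le\<close>)

lemma subsum_union:
  fixes x :: "nat \<Rightarrow> real"
  assumes pos: "\<And>n. x n > 0" and sx: "summable x" and d: "A \<inter> B = {}"
  shows "subsum x (A \<union> B) = subsum x A + subsum x B"
  unfolding subsum_def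
  apply (subst suminf_add[OF sub_summable[OF pos sx] sub_summable[OF pos sx]])
  apply (rule arg_cong[where f=suminf])
  using d by (auto simp: fun_eq_iff)

lemma subsum_single:
  fixes x :: "nat \<Rightarrow> real"
  shows "subsum x {j} = x j"
proof -
  have "(\<lambda>n. if n \<in> {j} then x n else 0) = (\<lambda>n. if n = j then x n else 0)" by auto
  thus ?thesis unfolding subsum_def using sums_single[of j x] sums_unique by metis
qed

lemma subsum_nonneg:
  fixes x :: "nat \<Rightarrow> real"
  assumes pos: "\<And>n. x n > 0" and sx: "summable x"
  shows "0 \<le> subsum x A"
  unfolding subsum_def
  by (rule suminf_nonneg[OF sub_summable[OF pos sx]]) (use pos in \<open>auto simp: less_imp_le\<close>)

lemma subsum_pos:
  fixes x :: "nat \<Rightarrow> real"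
  assumes pos: "\<And>n. x n > 0" and sx: "summable x" and j: "j \<in> A"
  shows "0 < subsum x A"
  unfolding subsum_def
  by (rule suminf_pos2[OF sub_summable[OF pos sx], where i=j]) (use pos j in \<open>auto simp: less_imp_le\<close>)

lemma subsum_strict:
  fixes x :: "nat \<Rightarrow> real"
  assumes pos: "\<And>n. x n > 0" and sx: "summable x" and ab: "A \<subset> B"
  shows "subsum x A < subsum x B"
proof -
  have "B = A \<union> (B - A)" using ab by auto
  hence "subsum x B = subsum x A + subsum x (B - A)"
    using subsum_union[OF pos sx, of A "B - A"] by auto
  moreover obtain j where "j \<in> B - A" using ab by auto
  ultimately show ?thesis using subsum_pos[OF pos sx, where j=j and A="B - A"] by auto
qed

lemma subsum_mono:
  fixes x :: "nat \<Rightarrow> real"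
  assumes pos: "\<And>n. x n > 0" and sx: "summable x" and ab: "A \<subseteq> B"
  shows "subsum x A \<le> subsum x B"
proof (cases "A = B")
  case False
  hence "A \<subset> B" using ab by auto
  thus ?thesis using subsum_strict[OF pos sx] by (simp add: less_imp_le)
qed simp

lemma subsum_insert:
  fixes x :: "nat \<Rightarrow> real"
  assumes pos: "\<And>n. x n > 0" and sx: "summable x" and p: "p \<notin> D"
  shows "subsum x (insert p D) = x p + subsum x D"
  using subsum_union[OF pos sx, of "{p}" D] p subsum_single[of x p] by auto

lemma subsum_ge:
  fixes x :: "nat \<Rightarrow> real"
  assumes pos: "\<And>n. x n > 0" and sx: "summable x" and j: "j \<in> A"
  shows "x j \<le> subsum x A"
  using subsum_mono[OF pos sx, of "{j}" A] j subsum_single[of x j] by auto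

theorem theorem3p6:
  fixes m :: nat
  assumes "m \<ge> 3"
  shows "\<not> (\<exists>x :: nat \<Rightarrow> real. (\<forall>n. x n > 0) \<and> summable x \<and> interval_filling x \<and>
            cardinal_function x ` achievement_set x = {FinCard 1, FinCard m})"
proof
  assume "\<exists>x :: nat \<Rightarrow> real. (\<forall>n. x n > 0) \<and> summable x \<and> interval_filling x \<and>
            cardinal_function x ` achievement_set x = {FinCard 1, FinCard m}"
  then obtain x :: "nat \<Rightarrow> real" where pos: "\<And>n. x n > 0" and sx: "summable x"
    and ifl: "interval_filling x"
    and rng: "cardinal_function x ` achievement_set x = {FinCard 1, FinCard m}" by blast
  define F where "F = (\<lambda>t. {A :: nat set. subsum x A = t})"
  have H: "finite (F (subsum x A)) \<and> (card (F (subsum x A)) = 1 \<or> card (F (subsum x A)) = m)" for A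
  proof -
    have "subsum x A \<in> achievement_set x" unfolding achievement_set_def by blast
    hence "cardval_of (F (subsum x A)) \<in> {FinCard 1, FinCard m}"
      using rng unfolding cardinal_function_def F_def by blast
    thus ?thesis unfolding cardval_of_def by (auto split: if_splits)
  qed
  define S where "S = subsum x UNIV"
  have iv: "t \<in> achievement_set x" if "0 \<le> t" "t \<le> S" for t
  proof -
    have "0 = subsum x {}" by (simp add: subsum_def)
    hence "0 \<in> achievement_set x" "S \<in> achievement_set x"
      unfolding achievement_set_def S_def by blast+
    thus ?thesis using ifl that unfolding interval_filling_def is_interval_1 by blast
  qed
  have cl: "closed {subsum x A | A. k \<notin> A}" for k by (rule closed_avoid[OF pos sx])
  have L: "\<exists>D. k \<notin> D \<and> subsum x D = x k" for k
  proof -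
    define t where "t = (\<lambda>j. x k - x k * inverse (real (Suc j)))"
    have tl: "t \<longlonglongrightarrow> x k - x k * 0"
      unfolding t_def by (intro tendsto_intros LIMSEQ_inverse_real_of_nat)
    have "t j \<in> {subsum x A | A. k \<notin> A}" for j
    proof -
      have i1: "inverse (real (Suc j)) \<le> 1" "0 < inverse (real (Suc j))"
        by (auto simp: inverse_le_1_iff)
      have "x k * inverse (real (Suc j)) \<le> x k * 1"
        using i1 pos[of k] by (intro mult_left_mono) auto
      hence t0: "0 \<le> t j" unfolding t_def by simp
      have tlt: "t j < x k" unfolding t_def using i1 pos[of k] by simp
      have "x k \<le> S" unfolding S_def by (rule subsum_ge[OF pos sx]) simp
      hence "t j \<in> achievement_set x" using iv t0 tlt by simp
      then obtain E where E: "t j = subsum x E" unfolding achievement_set_def by blast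
      have "k \<notin> E" using subsum_ge[OF pos sx, of k E] E tlt by auto
      thus ?thesis using E by blast
    qed
    hence "x k \<in> {subsum x A | A. k \<notin> A}"
      using closed_sequentially[OF cl[of k], where f=t and l="x k"] tl by simp
    thus ?thesis by auto
  qed
  have Fk: "card (F (x k)) = m" for k
  proof -
    obtain D where D: "k \<notin> D" "subsum x D = x k" using L by blast
    have xk: "x k = subsum x {k}" by (simp add: subsum_single)
    have "{{k}, D} \<subseteq> F (x k)" using D unfolding F_def by (auto simp: subsum_single)
    moreover have "{k} \<noteq> D" using D by auto
    hence "card {{k}, D} = 2" by simp
    ultimately have "2 \<le> card (F (x k))" using H[of "{k}"] xk by (metis card_mono)
    thus ?thesis using H[of "{k}"] xk by auto
  qed
  obtain p where pmax: "\<And>n. x n \<le> x p"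
  proof -
    have "x \<longlonglongrightarrow> 0" by (rule summable_LIMSEQ_zero[OF sx])
    then obtain N where N: "\<And>n. n \<ge> N \<Longrightarrow> x n < x 0"
      using pos[of 0] by (metis (no_types, lifting) diff_zero eventually_sequentially order_tendstoD(2))
    define M where "M = Max (x ` {..N})"
    have "M \<in> x ` {..N}" unfolding M_def by (intro Max_in) auto
    then obtain p where p: "p \<le> N" "x p = M" by auto
    have "x n \<le> x p" for n
    proof (cases "n \<le> N")
      case True thus ?thesis using p unfolding M_def by simp
    next
      case False
      hence "x n < x 0" using N by auto
      moreover have "x 0 \<le> x p" using p unfolding M_def by simp
      ultimately show ?thesis by simp
    qed
    thus ?thesis using that by blast
  qed
  have small: "\<exists>k. k \<notin> Z \<and> x k < x p" if "finite Z" for Z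
  proof -
    have "x \<longlonglongrightarrow> 0" by (rule summable_LIMSEQ_zero[OF sx])
    then obtain N where N: "\<And>n. n \<ge> N \<Longrightarrow> x n < x p"
      using pos[of p] by (metis (no_types, lifting) diff_zero eventually_sequentially order_tendstoD(2))
    define k where "k = Suc (Max (insert N Z))"
    have "z \<le> Max (insert N Z)" if "z \<in> insert N Z" for z
      using \<open>finite Z\<close> that by simp
    hence "k \<notin> Z" "k \<ge> N" unfolding k_def by force+
    thus ?thesis using N by blast
  qed
  have caseI: False if B: "p \<notin> B" "subsum x B = x p" and k: "k \<notin> B" "k \<noteq> p" "x k < x p" for B k
  proof -
    define T where "T = subsum x (insert k B)"
    have T: "T = x k + x p" unfolding T_def using subsum_insert[OF pos sx k(1)] B by simp
    have avoid: "p \<notin> D" if "D \<in> F (x k)" for D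
      using that subsum_ge[OF pos sx, of p D] k unfolding F_def by auto
    have img: "insert p ` F (x k) \<subseteq> F T"
    proof
      fix E assume "E \<in> insert p ` F (x k)"
      then obtain D where D: "D \<in> F (x k)" "E = insert p D" by auto
      have "subsum x E = x p + x k" using D avoid[OF D(1)] subsum_insert[OF pos sx, of p D]
        unfolding F_def by auto
      thus "E \<in> F T" unfolding F_def T by simp
    qed
    have inj: "inj_on (insert p) (F (x k))"
      using avoid unfolding inj_on_def by (metis insert_ident)
    have fin: "finite (F T)" using H[of "insert k B"] unfolding T_def by simp
    have new: "insert k B \<in> F T" "insert k B \<notin> insert p ` F (x k)"
      using B k unfolding F_def T_def by auto
    have "insert (insert k B) (insert p ` F (x k)) \<subseteq> F T" using img new by auto
    hence "card (insert (insert k B) (insert p ` F (x k))) \<le> card (F T)"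
      using fin by (rule card_mono[rotated])
    moreover have "card (insert (insert k B) (insert p ` F (x k))) = m + 1"
    proof -
      have "finite (insert p ` F (x k))" using img fin finite_subset by blast
      hence "card (insert (insert k B) (insert p ` F (x k))) = Suc (card (insert p ` F (x k)))"
        using new(2) by simp
      also have "card (insert p ` F (x k)) = m" using card_image[OF inj] Fk[of k] by simp
      finally show ?thesis by simp
    qed
    ultimately show False using H[of "insert k B"] assms unfolding T_def by auto
  qed
  have caseII: False if B: "p \<notin> B" "subsum x B = x p" "insert p B = UNIV" for B
  proof -
    have "F (x p) \<subseteq> {{p}, B}"
    proof
      fix D assume D: "D \<in> F (x p)"
      hence sD: "subsum x D = x p" unfolding F_def by simp
      show "D \<in> {{p}, B}"
      proof (cases "p \<in> D")
        case True
        hence "{p} \<subseteq> D" by auto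
        moreover have "\<not> {p} \<subset> D" using subsum_strict[OF pos sx, of "{p}" D] sD subsum_single[of x p] by auto
        ultimately show ?thesis by auto
      next
        case False
        hence "D \<subseteq> B" using B(3) by auto
        moreover have "\<not> D \<subset> B" using subsum_strict[OF pos sx, of D B] sD B(2) by auto
        ultimately show ?thesis by auto
      qed
    qed
    hence "card (F (x p)) \<le> card {{p}, B}" by (intro card_mono) auto
    also have "\<dots> \<le> 2" by (simp add: card_insert_le_m1)
    finally show False using Fk[of p] assms by simp
  qed
  obtain B where B: "p \<notin> B" "subsum x B = x p" using L by blast
  show False
  proof (cases "insert p B = UNIV")
    case True thus False using caseII B by blast
  next
    case False
    then obtain q where q: "q \<notin> B" "q \<noteq> p" by auto
    show False
    proof (cases "x q < x p")
      case True thus False using caseI[OF B q] by blast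
    next
      case False
      hence xq: "x q = x p" using pmax[of q] by simp
      obtain k where k: "k \<notin> {p, q}" "x k < x p" using small[of "{p,q}"] by auto
      show False using caseI[of "{q}" k] q k xq subsum_single[of x q] by auto
    qed
  qed
qed

end
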